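(* Let $\lambda_1>\lambda_2$ be nonzero real numbers, let $C_1,C_2\in\mathbb{R}$, and set $$q(t)=\frac{C_1}{\lambda_1}\big(e^{\lambda_1 t}-1\big)+\frac{C_2}{\lambda_2}\big(e^{\lambda_2 t}-1\big)+1 .$$ Write $\Theta=C_1\left(-\tfrac{C_2}{C_1}\right)^{\frac{\lambda_1}{\lambda_1-\lambda_2}}\left(\tfrac1{\lambda_1}-\tfrac1{\lambda_2}\right)+1-\tfrac{C_1}{\lambda_1}-\tfrac{C_2}{\lambda_2}$ (defined when $C_1>0>C_2$). Then $q$ vanishes at some $t>0$ if and only if one of the following holds: 1. $\lambda_1>0$ and: (a) $C_1<0$; or (b) $C_1>0$, $C_2<0$, $C_1+C_2<0$, $\Theta\le 0$; or (c) $C_1=0$, $C_2<0$, $\lambda_2>0$; or (d) $C_1=0$, $C_2<\lambda_2$, $\lambda_2<0$. 2. $\lambda_1<0$ and: (a) $C_1>0$, $C_2<0$, $C_1+C_2<0$, $\Theta\le0$; or (b) $C_1<0$, $\tfrac{C_1}{\lambda_1}+\tfrac{C_2}{\lambda_2}>1$; or (c) $C_1=0$, $C_2<0$, $\lambda_2>0$; or (d) $C_1=0$, $C_2<\lambda_2$, $\lambda_2<0$.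
   Context: Consider the extended system $\dot{\mathbf v}=-v_1\mathbf v+Q\mathbf v$, $\mathbf v=(v_1,v_2)$, for a constant real $2\times2$ matrix $Q$; its solution blows up in finite positive time iff the decisive function $q$ (with $q(0)=1$, $\dot q=u_1$, $\dot{\mathbf u}=Q\mathbf u$, $\mathbf u(0)=\mathbf v(0)$, $\mathbf v=\mathbf u/q$) vanishes at some $t>0$. If $AQA^{-1}=\mathrm{diag}(\lambda_1,\lambda_2)$ with $A=(a_{ij})$ nonsingular, then $q$ has exactly the form above with $C_1=\frac{a_{22}}{\det A}(a_{11}v_1(0)+a_{12}v_2(0))$, $C_2=-\frac{a_{12}}{\det A}(a_{21}v_1(0)+a_{22}v_2(0))$; so the claim characterizes finite-time blow-up of the extended system in this case. *)

theory Defs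
  imports Complex_Main
begin

definition decisive_q :: "real \<Rightarrow> real \<Rightarrow> real \<Rightarrow> real \<Rightarrow> real \<Rightarrow> real" where
  "decisive_q l1 l2 C1 C2 t =
     C1 / l1 * (exp (l1 * t) - 1) + C2 / l2 * (exp (l2 * t) - 1) + 1"

text \<open>Theta; only meaningful when C1 > 0 > C2 (then the base of powr is positive).\<close>
definition Theta :: "real \<Rightarrow> real \<Rightarrow> real \<Rightarrow> real \<Rightarrow> real" where
  "Theta l1 l2 C1 C2 =
     C1 * ((- C2 / C1) powr (l1 / (l1 - l2))) * (1 / l1 - 1 / l2) + 1 - C1 / l1 - C2 / l2"

end

theory Submission
  imports Defs "HOL-Real_Asymp.Real_Asymp"
begin

lemma exp_neg_lim: fixes l :: real assumes "l < 0" shows "((\<lambda>t. exp (l * t)) \<longlongrightarrow> 0) at_top"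
  using assms by real_asymp

lemma q_zero: "decisive_q l1 l2 C1 C2 0 = 1"
  by (simp add: decisive_q_def)

lemma q_deriv:
  assumes "l1 \<noteq> 0" "l2 \<noteq> 0"
  shows "(decisive_q l1 l2 C1 C2 has_real_derivative (C1*exp(l1*t) + C2*exp(l2*t))) (at t)"
proof -
  have "((\<lambda>t. C1 / l1 * (exp (l1 * t) - 1) + C2 / l2 * (exp (l2 * t) - 1) + 1) has_real_derivative
        (C1 / l1 * (exp (l1 * t) * l1) + C2 / l2 * (exp (l2 * t) * l2))) (at t)"
    by (auto intro!: derivative_eq_intros)
  moreover have "C1 / l1 * (exp (l1 * t) * l1) + C2 / l2 * (exp (l2 * t) * l2) = C1*exp(l1*t) + C2*exp(l2*t)"
    using assms by simp
  ultimately show ?thesis unfolding decisive_q_def[abs_def] by simp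
qed

lemma q_cont: "continuous_on S (decisive_q l1 l2 C1 C2)"
  unfolding decisive_q_def[abs_def] by (intro continuous_intros)

lemma q_ivt:
  assumes "t > 0" "decisive_q l1 l2 C1 C2 t \<le> 0"
  shows "\<exists>x>0. decisive_q l1 l2 C1 C2 x = 0"
proof -
  obtain x where "0 \<le> x" "x \<le> t" "decisive_q l1 l2 C1 C2 x = 0"
    using IVT2'[of "decisive_q l1 l2 C1 C2" t 0 0] assms q_cont q_zero by fastforce
  moreover have "x \<noteq> 0" using calculation q_zero by force
  ultimately show ?thesis by (intro exI[of _ x]) auto
qed

lemma deriv_factor: fixes C1 C2 l1 l2 x :: real shows "C1*exp(l1*x) + C2*exp(l2*x) = exp(l2*x) * (C1*exp((l1-l2)*x) + C2)"
proof -
  have "exp(l1*x) = exp(l2*x + (l1-l2)*x)" by (simp add: algebra_simps)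
  also have "\<dots> = exp(l2*x) * exp((l1-l2)*x)" by (simp add: mult_exp_exp)
  finally have "exp(l1*x) = exp(l2*x) * exp((l1-l2)*x)" .
  thus ?thesis by (simp add: algebra_simps)
qed

lemma case_C1_zero:
  assumes "l2 \<noteq> 0"
  shows "(\<exists>t>0. decisive_q l1 l2 0 C2 t = 0) \<longleftrightarrow> (C2 < 0 \<and> l2 > 0) \<or> (C2 < l2 \<and> l2 < 0)"
proof
  assume "\<exists>t>0. decisive_q l1 l2 0 C2 t = 0"
  then obtain t where t: "t > 0" "1 + C2/l2 * (exp (l2*t) - 1) = 0"
    by (auto simp: decisive_q_def)
  define b where "b = C2 / l2"
  have C2: "C2 = b * l2" using assms by (simp add: b_def)
  have tb: "b * (exp (l2*t) - 1) = -1" using t by (simp add: b_def)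
  show "(C2 < 0 \<and> l2 > 0) \<or> (C2 < l2 \<and> l2 < 0)"
  proof (cases "l2 > 0")
    case True
    then have "exp (l2*t) > 1" using t by simp
    then have "b < 0" using tb by (smt (verit) mult_nonneg_nonneg)
    then show ?thesis using C2 True by (simp add: mult_neg_pos)
  next
    case False
    then have l2: "l2 < 0" using assms by simp
    then have e: "exp (l2*t) < 1" using t by (simp add: mult_neg_pos)
    have "b * (1 - exp (l2*t)) = 1" using tb by (simp add: algebra_simps)
    moreover have "1 - exp (l2*t) \<noteq> 0" using e by linarith
    ultimately have "b = 1 / (1 - exp (l2*t))" by (simp add: eq_divide_eq)
    moreover have "1 / (1 - exp (l2*t)) > 1" using e by (simp add: field_simps)
    ultimately have "b > 1" using assms t by simp
    then have "b * l2 < 1 * l2" using l2 by (intro mult_strict_right_mono_neg) auto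
    then show ?thesis using C2 l2 by simp
  qed
next
  assume H: "(C2 < 0 \<and> l2 > 0) \<or> (C2 < l2 \<and> l2 < 0)"
  define b where "b = C2 / l2"
  have hb: "(b < 0 \<and> l2 > 0) \<or> (b > 1 \<and> l2 < 0)"
    using H by (auto simp: b_def divide_neg_pos field_simps)
  have bnz: "b \<noteq> 0" using hb by auto
  have pos: "1 - 1/b > 0" using hb by (auto simp: field_simps)
  define t where "t = ln (1 - 1/b) / l2"
  have et: "exp (l2 * t) = 1 - 1/b" using assms pos by (simp add: t_def)
  have "t > 0"
  proof (cases "l2 > 0")
    case True
    then have "1 - 1/b > 1" using hb by (auto simp: field_simps)
    then show ?thesis using True by (simp add: t_def)
  next
    case False
    then have "1 - 1/b < 1" "l2 < 0" using hb by (auto simp: field_simps)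
    then show ?thesis using pos by (simp add: t_def divide_neg_neg)
  qed
  moreover have "decisive_q l1 l2 0 C2 t = 0"
    using et bnz by (simp add: decisive_q_def b_def[symmetric])
  ultimately show "\<exists>t>0. decisive_q l1 l2 0 C2 t = 0" by blast
qed

lemma case_C1_pos:
  fixes l1 l2 C1 C2 :: real
  assumes "l2 < l1" "l1 \<noteq> 0" "l2 \<noteq> 0" "C1 > 0"
  shows "(\<exists>t>0. decisive_q l1 l2 C1 C2 t = 0) \<longleftrightarrow> (C2 < 0 \<and> C1 + C2 < 0 \<and> Theta l1 l2 C1 C2 \<le> 0)"
proof -
  let ?q = "decisive_q l1 l2 C1 C2"
  let ?q' = "\<lambda>x. C1*exp(l1*x) + C2*exp(l2*x)"
  define d where "d = l1 - l2"
  have d: "d > 0" using assms by (simp add: d_def)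
  have der: "\<And>x. DERIV ?q x :> ?q' x" using q_deriv assms(2,3) by blast
  have fac: "\<And>x. ?q' x = exp(l2*x) * (C1*exp(d*x) + C2)" unfolding d_def by (rule deriv_factor)
  have mono1: "?q t > 1" if tt: "C1 + C2 \<ge> 0" "t > 0" for t
  proof -
    obtain z where z: "0 < z" "z < t" "?q t - ?q 0 = (t - 0) * ?q' z"
      using MVT2[of 0 t ?q ?q'] der tt by blast
    have "exp (d*z) > 1" using z d by simp
    then have "C1*exp(d*z) > C1 * 1" using assms(4) by (intro mult_strict_left_mono) auto
    then have "C1*exp(d*z) + C2 > 0" using tt by simp
    then have "?q' z > 0" using fac by simp
    then have "t * ?q' z > 0" using tt by simp
    then show ?thesis using z q_zero[of l1 l2 C1 C2] by simp
  qed
  have main: "(\<exists>t>0. ?q t = 0) \<longleftrightarrow> Theta l1 l2 C1 C2 \<le> 0" if h: "C2 < 0" "C1 + C2 < 0"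
  proof -
    define r where "r = - C2 / C1"
    have r: "r > 1" using h assms(4) by (simp add: r_def field_simps)
    define ts where "ts = ln r / d"
    have ts: "ts > 0" using r d by (simp add: ts_def)
    have ets: "exp (d*ts) = r" using d r by (simp add: ts_def)
    have C1r: "C1 * r = - C2" using assms(4) by (simp add: r_def)
    have minq: "?q t \<ge> ?q ts" for t
    proof (cases "t < ts")
      case True
      obtain z where z: "t < z" "z < ts" "?q ts - ?q t = (ts - t) * ?q' z"
        using MVT2[of t ts ?q ?q'] der True by blast
      have "d*z < d*ts" using z d by simp
      then have "exp (d*z) < r" using ets by (metis exp_less_cancel_iff)
      then have "C1*exp(d*z) < C1 * r" using assms(4) by (intro mult_strict_left_mono) auto
      then have "C1*exp(d*z) + C2 < 0" using C1r by simp
      then have "?q' z < 0" using fac by (simp add: mult_pos_neg)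
      then show ?thesis using z True by (smt (verit) mult_pos_neg)
    next
      case False
      show ?thesis
      proof (cases "t = ts")
        case True then show ?thesis by simp
      next
        case False2: False
        then have lt: "ts < t" using False by simp
        obtain z where z: "ts < z" "z < t" "?q t - ?q ts = (t - ts) * ?q' z"
          using MVT2[of ts t ?q ?q'] der lt by blast
        have "d*z > d*ts" using z d by simp
        then have "exp (d*z) > r" using ets by (metis exp_less_cancel_iff)
        then have "C1*exp(d*z) > C1 * r" using assms(4) by (intro mult_strict_left_mono) auto
        then have "C1*exp(d*z) + C2 > 0" using C1r by simp
        then have "?q' z > 0" using fac by simp
        then show ?thesis using z lt by (smt (verit) mult_pos_pos)
      qed
    qed
    define P where "P = r powr (l1 / d)"
    have e1: "exp (l1 * ts) = P" using r d by (simp add: P_def powr_def ts_def)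
    have "exp (l2 * ts) = r powr (l2 / d)" using r d by (simp add: powr_def ts_def)
    also have "l2 / d = l1 / d - 1" using d by (simp add: d_def field_simps)
    also have "r powr (l1 / d - 1) = P / r" using r by (simp add: P_def powr_diff)
    finally have e2: "exp (l2 * ts) = P / r" .
    have C2r: "C2 / r = - C1" using h assms(4) by (simp add: r_def)
    have "?q ts = C1 / l1 * (P - 1) + C2 / l2 * (P / r - 1) + 1"
      by (simp add: decisive_q_def e1 e2)
    also have "\<dots> = C1 * P * (1 / l1 - 1 / l2) + 1 - C1 / l1 - C2 / l2"
    proof -
      have "C2 * (P / r) = - C1 * P" using C2r by (metis mult.commute times_divide_eq_right)
      then show ?thesis using assms(2,3) by (simp add: field_simps)
    qed
    also have "\<dots> = Theta l1 l2 C1 C2" by (simp add: Theta_def r_def d_def P_def)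
    finally have qts: "?q ts = Theta l1 l2 C1 C2" .
    show ?thesis
    proof
      assume "\<exists>t>0. ?q t = 0"
      then obtain t where "?q t = 0" by blast
      then show "Theta l1 l2 C1 C2 \<le> 0" using minq[of t] qts by simp
    next
      assume "Theta l1 l2 C1 C2 \<le> 0"
      then show "\<exists>t>0. ?q t = 0" using q_ivt[of ts] ts qts by simp
    qed
  qed
  show ?thesis
  proof (cases "C2 < 0 \<and> C1 + C2 < 0")
    case True then show ?thesis using main by blast
  next
    case False
    then have "C1 + C2 \<ge> 0" using assms(4) by linarith
    then have "\<not> (\<exists>t>0. ?q t = 0)" using mono1 by fastforce
    then show ?thesis using False by blast
  qed
qed

lemma case_C1_neg_l1pos:
  fixes l1 l2 C1 C2 :: real
  assumes "l2 < l1" "l1 > 0" "l2 \<noteq> 0" "C1 < 0"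
  shows "\<exists>t>0. decisive_q l1 l2 C1 C2 t = 0"
proof -
  define K where "K = 1 - C1/l1 - C2/l2"
  define g where "g t = C1/l1 + C2/l2 * exp ((l2-l1)*t) + K * exp ((-l1)*t)" for t
  have "(g \<longlongrightarrow> C1/l1 + C2/l2 * 0 + K * 0) at_top"
    unfolding g_def[abs_def] using assms
    by (intro tendsto_intros exp_neg_lim) auto
  then have lim: "(g \<longlongrightarrow> C1/l1) at_top" by simp
  have "C1/l1 < 0" using assms by (simp add: divide_neg_pos)
  then have "eventually (\<lambda>t. g t < 0) at_top" by (rule order_tendstoD(2)[OF lim])
  moreover have "eventually (\<lambda>t. t > (0::real)) at_top" by (rule eventually_gt_at_top)
  ultimately have "eventually (\<lambda>t. g t < 0 \<and> t > 0) at_top" by (rule eventually_conj)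
  then obtain N where "\<forall>t\<ge>N. g t < 0 \<and> t > 0" by (auto simp: eventually_at_top_linorder)
  then obtain t where t: "g t < 0" "t > 0" by blast
  have "decisive_q l1 l2 C1 C2 t = exp (l1*t) * g t"
  proof -
    have a: "exp (l1*t) * exp ((l2-l1)*t) = exp (l2*t)" by (simp add: mult_exp_exp algebra_simps)
    have b: "exp (l1*t) * exp ((-l1)*t) = 1" by (simp add: mult_exp_exp)
    have "exp (l1*t) * g t = C1/l1 * exp (l1*t) + C2/l2 * (exp (l1*t) * exp ((l2-l1)*t)) + K * (exp (l1*t) * exp ((-l1)*t))"
      unfolding g_def by (simp add: distrib_left mult.assoc mult.left_commute)
    also have "\<dots> = C1/l1 * exp (l1*t) + C2/l2 * exp (l2*t) + K" by (simp only: a b mult_1_right)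
    also have "\<dots> = decisive_q l1 l2 C1 C2 t" unfolding decisive_q_def K_def by (simp add: algebra_simps)
    finally show ?thesis by simp
  qed
  also have "\<dots> < 0" using t by (simp add: mult_pos_neg)
  finally show ?thesis using q_ivt[of t] t by simp
qed

lemma case_C1_neg_l1neg:
  fixes l1 l2 C1 C2 :: real
  assumes "l2 < l1" "l1 < 0" "C1 < 0"
  shows "(\<exists>t>0. decisive_q l1 l2 C1 C2 t = 0) \<longleftrightarrow> C1 / l1 + C2 / l2 > 1"
proof
  assume "\<exists>t>0. decisive_q l1 l2 C1 C2 t = 0"
  then obtain t where t: "t > 0" "decisive_q l1 l2 C1 C2 t = 0" by blast
  show "C1 / l1 + C2 / l2 > 1"
  proof (rule ccontr)
    assume H: "\<not> C1 / l1 + C2 / l2 > 1"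
    define a where "a = C1 / l1"
    define b where "b = C2 / l2"
    define u where "u = 1 - exp (l1*t)"
    define v where "v = 1 - exp (l2*t)"
    have ab: "a + b \<le> 1" using H by (simp add: a_def b_def)
    have a: "a > 0" using assms by (simp add: a_def divide_neg_neg)
    have u: "0 < u" "u < 1" using t assms by (auto simp: u_def mult_neg_pos)
    have v: "v < 1" unfolding v_def by simp
    have "l2 * t < l1 * t" using assms t by simp
    then have uv: "u < v" by (simp add: u_def v_def)
    have q: "decisive_q l1 l2 C1 C2 t = 1 - a*u - b*v"
      by (simp add: decisive_q_def a_def b_def u_def v_def algebra_simps)
    have "1 - a*u - b*v > 0"
    proof (cases "b \<le> 0")
      case True
      have "b*v \<le> b*u" using True uv by (intro mult_left_mono_neg) auto
      then have "1 - a*u - b*v \<ge> 1 - (a+b)*u" by (simp add: algebra_simps)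
      moreover have "(a+b)*u < 1"
      proof (cases "a + b \<le> 0")
        case True then show ?thesis using u by (smt (verit) mult_nonpos_nonneg)
      next
        case False
        then have "(a+b)*u < (a+b)*1" using u by (intro mult_strict_left_mono) auto
        then show ?thesis using ab by simp
      qed
      ultimately show ?thesis by simp
    next
      case False
      have "a*u < a*1" using u a by (intro mult_strict_left_mono) auto
      moreover have "b*v < b*1" using v False by (intro mult_strict_left_mono) auto
      ultimately show ?thesis using ab by simp
    qed
    then show False using q t by simp
  qed
next
  assume H: "C1 / l1 + C2 / l2 > 1"
  have l2: "l2 < 0" using assms by simp
  have "(decisive_q l1 l2 C1 C2 \<longlongrightarrow> C1 / l1 * (0 - 1) + C2 / l2 * (0 - 1) + 1) at_top"
    unfolding decisive_q_def[abs_def] using assms l2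
    by (intro tendsto_intros exp_neg_lim) auto
  moreover have "C1 / l1 * (0 - 1) + C2 / l2 * (0 - 1) + 1 < 0" using H by simp
  ultimately have "eventually (\<lambda>t. decisive_q l1 l2 C1 C2 t < 0) at_top" by (rule order_tendstoD(2))
  moreover have "eventually (\<lambda>t. t > (0::real)) at_top" by (rule eventually_gt_at_top)
  ultimately have "eventually (\<lambda>t. decisive_q l1 l2 C1 C2 t < 0 \<and> t > 0) at_top" by (rule eventually_conj)
  then obtain N where "\<forall>t\<ge>N. decisive_q l1 l2 C1 C2 t < 0 \<and> t > 0" by (auto simp: eventually_at_top_linorder)
  then obtain t where t: "decisive_q l1 l2 C1 C2 t < 0" "t > 0" by blast
  then show "\<exists>t>0. decisive_q l1 l2 C1 C2 t = 0" using q_ivt[of t] by simp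
qed

theorem mainTheorem2:
  fixes l1 l2 C1 C2 :: real
  assumes "l1 > l2" and "l1 \<noteq> 0" and "l2 \<noteq> 0"
  shows "(\<exists>t>0. decisive_q l1 l2 C1 C2 t = 0) \<longleftrightarrow>
    ((l1 > 0 \<and>
        (C1 < 0
       \<or> (C1 > 0 \<and> C2 < 0 \<and> C1 + C2 < 0 \<and> Theta l1 l2 C1 C2 \<le> 0)
       \<or> (C1 = 0 \<and> C2 < 0 \<and> l2 > 0)
       \<or> (C1 = 0 \<and> C2 < l2 \<and> l2 < 0)))
   \<or> (l1 < 0 \<and>
        ((C1 > 0 \<and> C2 < 0 \<and> C1 + C2 < 0 \<and> Theta l1 l2 C1 C2 \<le> 0)
       \<or> (C1 < 0 \<and> C1 / l1 + C2 / l2 > 1)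
       \<or> (C1 = 0 \<and> C2 < 0 \<and> l2 > 0)
       \<or> (C1 = 0 \<and> C2 < l2 \<and> l2 < 0))))"
proof (cases "C1 = 0")
  case True
  then show ?thesis using case_C1_zero[of l2 l1 C2] assms by auto
next
  case False
  show ?thesis
  proof (cases "C1 > 0")
    case True
    then show ?thesis using case_C1_pos[of l2 l1 C1 C2] assms by auto
  next
    case False2: False
    then have C1: "C1 < 0" using False by simp
    show ?thesis
    proof (cases "l1 > 0")
      case True
      then show ?thesis using case_C1_neg_l1pos[of l2 l1 C1 C2] assms C1 by auto
    next
      case False
      then have "l1 < 0" using assms by simp
      then show ?thesis using case_C1_neg_l1neg[of l2 l1 C1 C2] assms C1 by auto
    qed
  qed
qed

end
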